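(* Let $\mathcal{H}$ be a set of connected subgraphs of a graph $G$. Then for every $\ell\in\mathbb{N}_0$, either there are more than $\ell$ pairwise vertex-disjoint graphs in $\mathcal{H}$, or there is a set $Q\subseteq V(G)$ with $|Q|\le(\mathrm{tw}(G)+1)\,\ell\log_2(\ell+1)$ such that $G-Q$ contains no graph of $\mathcal{H}$ (i.e. every member of $\mathcal{H}$ meets $Q$).
   Context: Graphs are finite, simple and undirected; $\mathrm{tw}$ denotes treewidth; $\log$ is base 2. *)

theory Defs
  imports Complex_Main
begin

definition graph :: "'a set \<Rightarrow> 'a set set \<Rightarrow> bool" where
  "graph V E \<longleftrightarrow> finite V \<and> (\<forall>e\<in>E. \<exists>u v. e = {u, v} \<and> u \<noteq> v \<and> u \<in> V \<and> v \<in> V)"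

definition subgraph :: "'a set \<Rightarrow> 'a set set \<Rightarrow> 'a set \<Rightarrow> 'a set set \<Rightarrow> bool" where
  "subgraph V' E' V E \<longleftrightarrow> graph V' E' \<and> V' \<subseteq> V \<and> E' \<subseteq> E"

definition connected_graph :: "'a set \<Rightarrow> 'a set set \<Rightarrow> bool" where
  "connected_graph V E \<longleftrightarrow> V \<noteq> {} \<and>
     (\<forall>u\<in>V. \<forall>v\<in>V. (u, v) \<in> rtrancl {(x, y). {x, y} \<in> E})"

definition tree :: "'a set \<Rightarrow> 'a set set \<Rightarrow> bool" where
  "tree V E \<longleftrightarrow> graph V E \<and> connected_graph V E \<and> card E = card V - 1"

definition tree_decomposition ::
  "'a set \<Rightarrow> 'a set set \<Rightarrow> nat set \<Rightarrow> nat set set \<Rightarrow> (nat \<Rightarrow> 'a set) \<Rightarrow> bool" where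
  "tree_decomposition V E VT ET B \<longleftrightarrow>
     tree VT ET \<and>
     (\<forall>t\<in>VT. B t \<subseteq> V) \<and>
     (\<forall>v\<in>V. \<exists>t\<in>VT. v \<in> B t) \<and>
     (\<forall>e\<in>E. \<exists>t\<in>VT. e \<subseteq> B t) \<and>
     (\<forall>v\<in>V. connected_graph {t\<in>VT. v \<in> B t} {e\<in>ET. e \<subseteq> {t\<in>VT. v \<in> B t}})"

definition decomposition_width :: "nat set \<Rightarrow> (nat \<Rightarrow> 'a set) \<Rightarrow> int" where
  "decomposition_width VT B = int (Max ((\<lambda>t. card (B t)) ` VT)) - 1"

definition treewidth :: "'a set \<Rightarrow> 'a set set \<Rightarrow> int" where
  "treewidth V E = Min {w. \<exists>VT ET B. tree_decomposition V E VT ET B \<and> w = decomposition_width VT B}"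

end

theory Submission
  imports Defs
begin

lemma rtrancl_avoid:
  assumes "(x,y) \<in> R\<^sup>*" "x \<noteq> u" "y \<noteq> u" "\<forall>z. (u,z)\<in>R \<longrightarrow> z = w"
    "\<forall>z. (z,u)\<in>R \<longrightarrow> z = w" "(u,u) \<notin> R"
  shows "(x,y) \<in> (R \<inter> {(a,b). a \<noteq> u \<and> b \<noteq> u})\<^sup>*"
proof -
  let ?R = "R \<inter> {(a,b). a \<noteq> u \<and> b \<noteq> u}"
  have "(y \<noteq> u \<longrightarrow> (x,y) \<in> ?R\<^sup>*) \<and> (y = u \<longrightarrow> (x,w) \<in> ?R\<^sup>*)"
    using assms(1)
  proof (induction rule: rtrancl_induct)
    case base thus ?case using assms(2) by auto
  next
    case (step y z)
    show ?case
    proof (cases "z = u")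
      case True
      then have "y = w" using step.hyps(2) assms(5) by auto
      have "y \<noteq> u" using True step.hyps(2) assms(6) by auto
      then show ?thesis using step.IH \<open>y = w\<close> True by auto
    next
      case False
      show ?thesis
      proof (cases "y = u")
        case True
        then have "z = w" using step.hyps(2) assms(4) by auto
        then show ?thesis using step.IH True \<open>z \<noteq> u\<close> by auto
      next
        case False
        then have "(x,y) \<in> ?R\<^sup>*" using step.IH by auto
        moreover have "(y,z) \<in> ?R" using step.hyps(2) False \<open>z \<noteq> u\<close> by auto
        ultimately show ?thesis using \<open>z \<noteq> u\<close> by (meson rtrancl.rtrancl_into_rtrancl)
      qed
    qed
  qed
  thus ?thesis using assms(3) by auto
qed

lemma graph_finite_E: "graph V E \<Longrightarrow> finite E"
  unfolding graph_def by (rule finite_subset[of E "Pow V"]) auto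

lemma handshake:
  assumes "graph V E" shows "(\<Sum>v\<in>V. card {e\<in>E. v\<in>e}) = 2 * card E"
proof -
  have fE: "finite E" using graph_finite_E[OF assms] .
  have fV: "finite V" using assms unfolding graph_def by auto
  have "(\<Sum>v\<in>V. card {e\<in>E. v\<in>e}) = (\<Sum>v\<in>V. \<Sum>e\<in>E. if v\<in>e then 1 else 0)"
    by (simp add: sum.inter_filter[symmetric] fE)
  also have "\<dots> = (\<Sum>e\<in>E. \<Sum>v\<in>V. if v\<in>e then 1 else 0)" by (rule sum.swap)
  also have "\<dots> = (\<Sum>e\<in>E. 2)"
  proof (rule sum.cong)
    fix e assume "e \<in> E"
    then obtain a b where ab: "e = {a,b}" "a \<noteq> b" "a \<in> V" "b \<in> V" using assms unfolding graph_def by blast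
    have "(\<Sum>v\<in>V. if v\<in>e then 1 else 0) = card {v\<in>V. v\<in>e}"
      by (simp add: sum.inter_filter[symmetric] fV)
    also have "{v\<in>V. v\<in>e} = {a,b}" using ab by auto
    finally show "(\<Sum>v\<in>V. if v\<in>e then 1 else 0) = (2::nat)" using ab by simp
  qed simp
  finally show ?thesis by simp
qed

lemma tree_leaf:
  assumes "tree VT ET" "card VT \<ge> 2"
  shows "\<exists>u w. u\<in>VT \<and> w\<in>VT \<and> u\<noteq>w \<and> {u,w}\<in>ET \<and> (\<forall>e\<in>ET. u\<in>e \<longrightarrow> e={u,w})
     \<and> tree (VT-{u}) {e\<in>ET. u\<notin>e}"
proof -
  have g: "graph VT ET" and c: "connected_graph VT ET" and cE: "card ET = card VT - 1"
    using assms(1) unfolding tree_def by auto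
  have fV: "finite VT" using g unfolding graph_def by auto
  have fE: "finite ET" using graph_finite_E[OF g] .
  have edge: "\<And>e. e\<in>ET \<Longrightarrow> \<exists>a b. e = {a,b} \<and> a\<noteq>b \<and> a\<in>VT \<and> b\<in>VT"
    using g unfolding graph_def by auto
  have "\<exists>u\<in>VT. card {e\<in>ET. u\<in>e} \<le> 1"
  proof (rule ccontr)
    assume "\<not> ?thesis"
    then have "\<forall>u\<in>VT. 2 \<le> card {e\<in>ET. u\<in>e}" by auto
    then have "(\<Sum>v\<in>VT. 2) \<le> (\<Sum>v\<in>VT. card {e\<in>ET. v\<in>e})" by (intro sum_mono) auto
    then have "2 * card VT \<le> 2 * card ET" using handshake[OF g] by simp
    then show False using cE assms(2) by simp
  qed
  then obtain u where uV: "u\<in>VT" and du: "card {e\<in>ET. u\<in>e} \<le> 1" by blast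
  obtain y where yV: "y \<in> VT" and yu: "y \<noteq> u"
  proof -
    have "VT - {u} \<noteq> {}"
    proof
      assume "VT - {u} = {}"
      then have "VT \<subseteq> {u}" by auto
      then have "card VT \<le> card {u}" by (intro card_mono) auto
      then show False using assms(2) by simp
    qed
    then show ?thesis using that by auto
  qed
  let ?R = "{(x,y). {x,y}\<in>ET}"
  have "(u,y) \<in> ?R\<^sup>*" using c uV yV unfolding connected_graph_def by blast
  then obtain z where "(u,z) \<in> ?R"
  proof (cases rule: converse_rtranclE)
    case base then show ?thesis using yu by simp
  next
    case (step z) then show ?thesis using that by blast
  qed
  then have uz: "{u,z}\<in>ET" by simp
  obtain a b where ab: "{u,z} = {a,b}" "a\<noteq>b" "a\<in>VT" "b\<in>VT" using edge[OF uz] by blast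
  from ab(1) have "(u=a \<and> z=b) \<or> (u=b \<and> z=a)" by (simp add: doubleton_eq_iff)
  then have zu: "z \<noteq> u" and zV: "z \<in> VT" using ab(2-4) by auto
  have ne: "{e\<in>ET. u\<in>e} \<noteq> {}" using uz by auto
  have fin: "finite {e\<in>ET. u\<in>e}" using fE by auto
  have "card {e\<in>ET. u\<in>e} = 1" proof -
    have "0 < card {e\<in>ET. u\<in>e}" using ne fin by (simp only: card_gt_0_iff) simp
    then show ?thesis using du by linarith
  qed
  then obtain e0 where e0: "{e\<in>ET. u\<in>e} = {e0}" by (metis card_1_singletonE)
  have alle: "\<forall>e\<in>ET. u\<in>e \<longrightarrow> e={u,z}"
  proof (intro ballI impI)
    fix e assume "e \<in> ET" "u \<in> e"
    then have "e \<in> {e\<in>ET. u\<in>e}" by simp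
    then have "e \<in> {e0}" by (simp only: e0)
    moreover have "{u,z} \<in> {e\<in>ET. u\<in>e}" using uz by simp
    then have "{u,z} \<in> {e0}" by (simp only: e0)
    ultimately show "e = {u,z}" by simp
  qed
  let ?V' = "VT-{u}" and ?E' = "{e\<in>ET. u\<notin>e}"
  have g': "graph ?V' ?E'" unfolding graph_def
  proof (intro conjI ballI)
    show "finite ?V'" using fV by simp
    fix e assume "e \<in> ?E'"
    then obtain a b where "e = {a,b}" "a\<noteq>b" "a\<in>VT" "b\<in>VT" "u \<notin> e" using edge by blast
    then show "\<exists>a b. e = {a, b} \<and> a \<noteq> b \<and> a \<in> ?V' \<and> b \<in> ?V'" by auto
  qed
  have "connected_graph ?V' ?E'"
    unfolding connected_graph_def
  proof (intro conjI ballI)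
    show "?V' \<noteq> {}" using yV yu by auto
    fix a b assume a: "a \<in> ?V'" and b: "b \<in> ?V'"
    have "(a,b) \<in> ?R\<^sup>*" using c a b unfolding connected_graph_def by blast
    then have "(a,b) \<in> (?R \<inter> {(a,b). a \<noteq> u \<and> b \<noteq> u})\<^sup>*"
    proof (rule rtrancl_avoid[where w=z])
      show "a \<noteq> u" "b \<noteq> u" using a b by auto
      show "\<forall>z'. (u,z')\<in>?R \<longrightarrow> z' = z" using alle zu by (auto simp: doubleton_eq_iff)
      show "\<forall>z'. (z',u)\<in>?R \<longrightarrow> z' = z" using alle zu by (auto simp: doubleton_eq_iff)
      show "(u,u) \<notin> ?R"
      proof
        assume "(u,u) \<in> ?R"
        then have "{u} \<in> ET" by simp
        then obtain a b where "{u} = {a,b}" "a \<noteq> b" using edge by blast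
        then show False by (auto simp: doubleton_eq_iff)
      qed
    qed
    moreover have "?R \<inter> {(a,b). a \<noteq> u \<and> b \<noteq> u} = {(x,y). {x,y} \<in> ?E'}" by auto
    ultimately show "(a,b) \<in> {(x,y). {x,y} \<in> ?E'}\<^sup>*" by simp
  qed
  moreover have "card ?E' = card ?V' - 1"
  proof -
    have eqE: "ET = insert {u,z} ?E'"
    proof (rule set_eqI)
      fix e show "e \<in> ET \<longleftrightarrow> e \<in> insert {u,z} ?E'"
      proof
        assume "e \<in> ET" then show "e \<in> insert {u,z} ?E'" using alle by (cases "u \<in> e") simp_all
      next
        assume "e \<in> insert {u,z} ?E'" then show "e \<in> ET" using uz by (cases "e = {u,z}") simp_all
      qed
    qed
    have n1: "{u,z} \<notin> ?E'" by simp
    have f1: "finite ?E'" using fE by simp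
    have "card (insert {u,z} ?E') = Suc (card ?E')" using card_insert_disjoint[OF f1 n1] .
    then have "card ET = Suc (card ?E')" using eqE by (simp only:)
    moreover have "card ?V' = card VT - 1" using uV fV by (simp add: card_Diff_singleton)
    ultimately show ?thesis using cE by simp
  qed
  ultimately have "tree ?V' ?E'" using g' unfolding tree_def by auto
  then show ?thesis using uV zV zu uz alle by blast
qed

lemma conn_wS:
  assumes "connected_graph S {e\<in>ET. e\<subseteq>S}" "u \<in> S" "S \<noteq> {u}"
    "\<forall>e\<in>ET. u\<in>e \<longrightarrow> e={u,w}"
  shows "w \<in> S"
proof -
  obtain y where y: "y \<in> S" "y \<noteq> u" using assms(2,3) by blast
  let ?R = "{(x,y). {x,y} \<in> {e\<in>ET. e\<subseteq>S}}"
  have "(u,y) \<in> ?R\<^sup>*" using assms(1,2) y(1) unfolding connected_graph_def by blast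
  then obtain z where "(u,z) \<in> ?R"
  proof (cases rule: converse_rtranclE)
    case base then show ?thesis using y by simp
  next
    case (step z) then show ?thesis using that by blast
  qed
  then have "{u,z} \<in> ET" "{u,z} \<subseteq> S" by auto
  then have "{u,z} = {u,w}" using assms(4) by simp
  then have "z = w \<or> (z = u \<and> w = u)" by (auto simp: doubleton_eq_iff)
  then show ?thesis using \<open>{u,z} \<subseteq> S\<close> assms(2) by auto
qed

lemma conn_remove:
  assumes "connected_graph S {e\<in>ET. e\<subseteq>S}" "u \<in> S" "S \<noteq> {u}"
    "\<forall>e\<in>ET. u\<in>e \<longrightarrow> e={u,w}" "u \<noteq> w"
  shows "connected_graph (S-{u}) {e\<in>{e\<in>ET. u\<notin>e}. e\<subseteq>S-{u}}"
  unfolding connected_graph_def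
proof (intro conjI ballI)
  show "S - {u} \<noteq> {}" using assms(1,3) unfolding connected_graph_def by blast
  fix a b assume a: "a \<in> S - {u}" and b: "b \<in> S - {u}"
  let ?R = "{(x,y). {x,y} \<in> {e\<in>ET. e\<subseteq>S}}"
  have "(a,b) \<in> ?R\<^sup>*" using assms(1) a b unfolding connected_graph_def by blast
  then have "(a,b) \<in> (?R \<inter> {(a,b). a \<noteq> u \<and> b \<noteq> u})\<^sup>*"
  proof (rule rtrancl_avoid[where w=w])
    show "a \<noteq> u" "b \<noteq> u" using a b by auto
    show "\<forall>z'. (u,z')\<in>?R \<longrightarrow> z' = w"
    proof (intro allI impI)
      fix z' assume "(u,z') \<in> ?R"
      then have "{u,z'} = {u,w}" using assms(4) by simp
      then show "z' = w" using assms(5) by (auto simp: doubleton_eq_iff)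
    qed
    show "\<forall>z'. (z',u)\<in>?R \<longrightarrow> z' = w"
    proof (intro allI impI)
      fix z' assume "(z',u) \<in> ?R"
      then have "{u,z'} = {u,w}" using assms(4) by (simp add: insert_commute)
      then show "z' = w" using assms(5) by (auto simp: doubleton_eq_iff)
    qed
    show "(u,u) \<notin> ?R"
    proof
      assume "(u,u) \<in> ?R"
      then have "{u} \<in> ET" by simp
      then have "{u} = {u,w}" using assms(4) by blast
      then show False using assms(5) by (auto simp: doubleton_eq_iff)
    qed
  qed
  moreover have "?R \<inter> {(a,b). a \<noteq> u \<and> b \<noteq> u} = {(x,y). {x,y} \<in> {e\<in>{e\<in>ET. u\<notin>e}. e\<subseteq>S-{u}}}"
    by auto
  ultimately show "(a,b) \<in> {(x,y). {x,y} \<in> {e\<in>{e\<in>ET. u\<notin>e}. e\<subseteq>S-{u}}}\<^sup>*" by simp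
qed

lemma tree_hitting:
  assumes "tree VT ET" "\<forall>S\<in>F. S \<subseteq> VT \<and> connected_graph S {e\<in>ET. e\<subseteq>S}"
  shows "(\<exists>S'\<subseteq>F. finite S' \<and> card S' > l \<and> (\<forall>A\<in>S'. \<forall>B\<in>S'. A\<noteq>B \<longrightarrow> A\<inter>B={}))
       \<or> (\<exists>X\<subseteq>VT. card X \<le> l \<and> (\<forall>S\<in>F. S\<inter>X \<noteq> {}))"
  using assms
proof (induction "card VT" arbitrary: VT ET F l rule: less_induct)
  case less
  have g: "graph VT ET" and c: "connected_graph VT ET" using less.prems(1) unfolding tree_def by auto
  have fV: "finite VT" using g unfolding graph_def by auto
  have ne: "VT \<noteq> {}" using c unfolding connected_graph_def by auto
  have Fne: "\<And>S. S \<in> F \<Longrightarrow> S \<noteq> {}" using less.prems(2) unfolding connected_graph_def by blast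
  show ?case
  proof (cases "card VT \<ge> 2")
    case False
    have "card VT \<noteq> 0" using fV ne by simp
    then have "card VT = 1" using False by linarith
    then obtain t where t: "VT = {t}" by (metis card_1_singletonE)
    have Ft: "\<And>S. S \<in> F \<Longrightarrow> S = {t}"
    proof -
      fix S assume "S \<in> F"
      then have "S \<subseteq> {t}" "S \<noteq> {}" using less.prems(2) Fne t by auto
      then show "S = {t}" by blast
    qed
    show ?thesis
    proof (cases "F = {}")
      case True
      then show ?thesis by auto
    next
      case False
      then have F1: "F = {{t}}" using Ft by blast
      show ?thesis
      proof (cases "l = 0")
        case True
        then show ?thesis using F1 by (intro disjI1 exI[of _ F]) auto
      next
        case False
        then show ?thesis using F1 t by (intro disjI2 exI[of _ "{t}"]) auto
      qed
    qed
  next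
    case True
    obtain u w where uw: "u\<in>VT" "w\<in>VT" "u\<noteq>w" "{u,w}\<in>ET" and alle: "\<forall>e\<in>ET. u\<in>e \<longrightarrow> e={u,w}"
      and t': "tree (VT-{u}) {e\<in>ET. u\<notin>e}"
      using tree_leaf[OF less.prems(1) True] by blast
    let ?V' = "VT-{u}" and ?E' = "{e\<in>ET. u\<notin>e}"
    have lt: "card ?V' < card VT" using uw(1) fV by (meson card_Diff1_less)
    have transfer: "\<And>S. S \<subseteq> ?V' \<Longrightarrow> {e\<in>ET. e\<subseteq>S} = {e\<in>?E'. e\<subseteq>S}" by auto
    show ?thesis
    proof (cases "{u} \<in> F")
      case True
      show ?thesis
      proof (cases "l = 0")
        case True
        then show ?thesis using \<open>{u} \<in> F\<close> by (intro disjI1 exI[of _ "{{u}}"]) auto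
      next
        case False
        let ?F1 = "{S\<in>F. u\<notin>S}"
        have p2: "\<forall>S\<in>?F1. S \<subseteq> ?V' \<and> connected_graph S {e\<in>?E'. e\<subseteq>S}"
        proof
          fix S assume S: "S \<in> ?F1"
          then have "S \<subseteq> ?V'" using less.prems(2) by blast
          moreover have "connected_graph S {e\<in>ET. e\<subseteq>S}" using S less.prems(2) by blast
          ultimately show "S \<subseteq> ?V' \<and> connected_graph S {e\<in>?E'. e\<subseteq>S}" using transfer by simp
        qed
        from less.hyps[OF lt t' p2, of "l-1"]
        show ?thesis
        proof
          assume "\<exists>S'\<subseteq>?F1. finite S' \<and> card S' > l-1 \<and> (\<forall>A\<in>S'. \<forall>B\<in>S'. A\<noteq>B \<longrightarrow> A\<inter>B={})"
          then obtain S' where S': "S' \<subseteq> ?F1" "finite S'" "card S' > l-1"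
            "\<forall>A\<in>S'. \<forall>B\<in>S'. A\<noteq>B \<longrightarrow> A\<inter>B={}" by blast
          have nu: "{u} \<notin> S'" using S'(1) by blast
          have "card (insert {u} S') = Suc (card S')" using S'(2) nu by simp
          then have "card (insert {u} S') > l" using S'(3) False by linarith
          moreover have "insert {u} S' \<subseteq> F" using S'(1) \<open>{u} \<in> F\<close> by blast
          moreover have "\<forall>A\<in>insert {u} S'. \<forall>B\<in>insert {u} S'. A\<noteq>B \<longrightarrow> A\<inter>B={}"
            using S'(1,4) by blast
          ultimately show ?thesis using S'(2) by (intro disjI1 exI[of _ "insert {u} S'"]) auto
        next
          assume "\<exists>X\<subseteq>?V'. card X \<le> l-1 \<and> (\<forall>S\<in>?F1. S\<inter>X \<noteq> {})"
          then obtain X where X: "X \<subseteq> ?V'" "card X \<le> l-1" "\<forall>S\<in>?F1. S\<inter>X \<noteq> {}" by blast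
          have fX: "finite X" using X(1) fV finite_subset by blast
          have "card (insert u X) \<le> Suc (card X)" using fX by (simp add: card_insert_if)
          then have "card (insert u X) \<le> l" using X(2) False by linarith
          moreover have "insert u X \<subseteq> VT" using X(1) uw(1) by blast
          moreover have "\<forall>S\<in>F. S \<inter> insert u X \<noteq> {}" using X(3) by blast
          ultimately show ?thesis by blast
        qed
      qed
    next
      case False
      let ?f = "\<lambda>S. S - {u}"
      have wS: "\<And>S. S \<in> F \<Longrightarrow> u \<in> S \<Longrightarrow> w \<in> S"
      proof -
        fix S assume S: "S \<in> F" "u \<in> S"
        then have "S \<noteq> {u}" using False by blast
        then show "w \<in> S" using conn_wS[OF _ S(2) _ alle] S less.prems(2) by blast
      qed
      have p2: "\<forall>S\<in>?f ` F. S \<subseteq> ?V' \<and> connected_graph S {e\<in>?E'. e\<subseteq>S}"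
      proof
        fix S0 assume "S0 \<in> ?f ` F"
        then obtain S where S: "S \<in> F" "S0 = S - {u}" by blast
        have sub: "S0 \<subseteq> ?V'" using S less.prems(2) by blast
        have cS: "connected_graph S {e\<in>ET. e\<subseteq>S}" using S less.prems(2) by blast
        have "connected_graph S0 {e\<in>?E'. e\<subseteq>S0}"
        proof (cases "u \<in> S")
          case True
          have "S \<noteq> {u}" using False S by blast
          then show ?thesis using conn_remove[OF cS True _ alle uw(3)] S(2) by simp
        next
          case False
          then have "S0 = S" using S by simp
          then show ?thesis using cS transfer sub by simp
        qed
        then show "S0 \<subseteq> ?V' \<and> connected_graph S0 {e\<in>?E'. e\<subseteq>S0}" using sub by simp
      qed
      from less.hyps[OF lt t' p2, of l]
      show ?thesis
      proof
        assume "\<exists>S'\<subseteq>?f ` F. finite S' \<and> card S' > l \<and> (\<forall>A\<in>S'. \<forall>B\<in>S'. A\<noteq>B \<longrightarrow> A\<inter>B={})"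
        then obtain S' where S': "S' \<subseteq> ?f ` F" "finite S'" "card S' > l"
          "\<forall>A\<in>S'. \<forall>B\<in>S'. A\<noteq>B \<longrightarrow> A\<inter>B={}" by (elim exE conjE) simp
        have "\<exists>U. U \<subseteq> F \<and> inj_on ?f U \<and> S' = ?f ` U"
          using S'(1) by (simp only: subset_image_inj)
        then obtain U where U: "U \<subseteq> F" "inj_on ?f U" "S' = ?f ` U" by (elim exE conjE) simp
        have "finite (?f ` U)" using S'(2) U(3) by simp
        then have fU: "finite U" using finite_image_iff[OF U(2)] by simp
        have cU: "card U = card S'" using card_image[OF U(2)] U(3) by simp
        have "\<forall>A\<in>U. \<forall>B\<in>U. A\<noteq>B \<longrightarrow> A\<inter>B={}"
        proof (intro ballI impI)
          fix A B assume A: "A \<in> U" and B: "B \<in> U" and AB: "A \<noteq> B"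
          have "?f A \<noteq> ?f B" using U(2) A B AB unfolding inj_on_def by blast
          moreover have "?f A \<in> S'" "?f B \<in> S'" using U(3) A B by simp_all
          ultimately have d: "?f A \<inter> ?f B = {}" using S'(4) by simp
          have AF: "A \<in> F" and BF: "B \<in> F" using U(1) A B by (simp_all add: subset_iff)
          show "A \<inter> B = {}"
          proof (rule ccontr)
            assume "A \<inter> B \<noteq> {}"
            then obtain x where x: "x \<in> A" "x \<in> B" by blast
            show False
            proof (cases "x = u")
              case True
              have "w \<in> A" using wS[OF AF] x(1) True by simp
              moreover have "w \<in> B" using wS[OF BF] x(2) True by simp
              ultimately have "w \<in> ?f A \<inter> ?f B" using uw(3) by simp
              then show False using d by simp
            next
              case False
              then have "x \<in> ?f A \<inter> ?f B" using x by simp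
              then show False using d by simp
            qed
          qed
        qed
        then show ?thesis using U(1) fU cU S'(3) by (intro disjI1 exI[of _ U]) simp
      next
        assume "\<exists>X\<subseteq>?V'. card X \<le> l \<and> (\<forall>S\<in>?f ` F. S\<inter>X \<noteq> {})"
        then obtain X where X: "X \<subseteq> ?V'" "card X \<le> l" "\<forall>S\<in>?f ` F. S\<inter>X \<noteq> {}"
          by (elim exE conjE) simp
        have "\<forall>S\<in>F. S \<inter> X \<noteq> {}"
        proof
          fix S assume "S \<in> F"
          then have "(S - {u}) \<inter> X \<noteq> {}" using X(3) by simp
          then show "S \<inter> X \<noteq> {}" by blast
        qed
        then show ?thesis using X(1,2) fV by (intro disjI2 exI[of _ X]) auto
      qed
    qed
  qed
qed

lemma bag_conn:
  assumes td: "tree_decomposition V E VT ET B"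
    and sg: "subgraph VH EH V E" and ch: "connected_graph VH EH"
  defines "T \<equiv> {t\<in>VT. B t \<inter> VH \<noteq> {}}"
  shows "connected_graph T {e\<in>ET. e\<subseteq>T}"
proof -
  let ?RT = "{(x,y). {x,y} \<in> {e\<in>ET. e\<subseteq>T}}"
  let ?RH = "{(x,y). {x,y} \<in> EH}"
  have gH: "graph VH EH" and VHV: "VH \<subseteq> V" and EHE: "EH \<subseteq> E" using sg unfolding subgraph_def by auto
  have bagv: "\<And>v. v \<in> V \<Longrightarrow> \<exists>t\<in>VT. v \<in> B t" using td unfolding tree_decomposition_def by blast
  have bage: "\<And>e. e \<in> E \<Longrightarrow> \<exists>t\<in>VT. e \<subseteq> B t" using td unfolding tree_decomposition_def by blast
  have connv: "\<And>v. v \<in> V \<Longrightarrow> connected_graph {t\<in>VT. v \<in> B t} {e\<in>ET. e \<subseteq> {t\<in>VT. v \<in> B t}}"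
    using td unfolding tree_decomposition_def by blast
  have helper: "(t,t') \<in> ?RT\<^sup>*" if v: "v \<in> VH" and t: "t \<in> VT" "v \<in> B t" and t': "t' \<in> VT" "v \<in> B t'" for v t t'
  proof -
    have vV: "v \<in> V" using v VHV by blast
    let ?S = "{t\<in>VT. v \<in> B t}"
    have "(t,t') \<in> {(x,y). {x,y} \<in> {e\<in>ET. e \<subseteq> ?S}}\<^sup>*"
      using connv[OF vV] t t' unfolding connected_graph_def by blast
    moreover have "{(x,y). {x,y} \<in> {e\<in>ET. e \<subseteq> ?S}} \<subseteq> ?RT" using v unfolding T_def by auto
    ultimately show ?thesis using rtrancl_mono by blast
  qed
  have K: "v' \<in> VH \<and> (\<forall>t\<in>VT. \<forall>t'\<in>VT. v \<in> B t \<longrightarrow> v' \<in> B t' \<longrightarrow> (t,t') \<in> ?RT\<^sup>*)"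
    if v: "v \<in> VH" and p: "(v,v') \<in> ?RH\<^sup>*" for v v'
    using p
  proof (induction rule: rtrancl_induct)
    case base
    then show ?case using v helper by blast
  next
    case (step y z)
    have yz: "{y,z} \<in> EH" using step.hyps(2) by simp
    then obtain a b where ab: "{y,z} = {a,b}" "a \<in> VH" "b \<in> VH" using gH unfolding graph_def by blast
    then have zH: "z \<in> VH" by (auto simp: doubleton_eq_iff)
    obtain t0 where t0: "t0 \<in> VT" "{y,z} \<subseteq> B t0" using bage yz EHE by blast
    show ?case
    proof (intro conjI ballI impI)
      show "z \<in> VH" by (rule zH)
      fix t t'' assume t: "t \<in> VT" "t'' \<in> VT" "v \<in> B t" "z \<in> B t''"
      have "(t,t0) \<in> ?RT\<^sup>*" using step.IH t0 t by simp
      moreover have "(t0,t'') \<in> ?RT\<^sup>*" using helper[OF zH t0(1) _ t(2) t(4)] t0(2) by simp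
      ultimately show "(t,t'') \<in> ?RT\<^sup>*" by (rule rtrancl_trans)
    qed
  qed
  show ?thesis unfolding connected_graph_def
  proof (intro conjI ballI)
    obtain v where v: "v \<in> VH" using ch unfolding connected_graph_def by blast
    then obtain t where "t \<in> VT" "v \<in> B t" using bagv VHV by blast
    then have "t \<in> T" using v unfolding T_def by blast
    then show "T \<noteq> {}" by blast
  next
    fix x y assume x: "x \<in> T" and y: "y \<in> T"
    obtain v where v: "v \<in> VH" "v \<in> B x" "x \<in> VT" using x unfolding T_def by blast
    obtain v' where v': "v' \<in> VH" "v' \<in> B y" "y \<in> VT" using y unfolding T_def by blast
    have "(v,v') \<in> ?RH\<^sup>*" using ch v(1) v'(1) unfolding connected_graph_def by blast
    then show "(x,y) \<in> ?RT\<^sup>*" using K[OF v(1)] v v' by blast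
  qed
qed

lemma trivial_td:
  assumes g: "graph V E" shows "tree_decomposition V E {0} {} (\<lambda>_. V)"
proof -
  have tr: "tree {0::nat} {}"
    unfolding tree_def graph_def connected_graph_def by simp
  have a: "\<forall>e\<in>E. \<exists>t\<in>{0::nat}. e \<subseteq> V"
  proof
    fix e assume "e \<in> E"
    then obtain u v where "e = {u,v}" "u \<in> V" "v \<in> V" using g unfolding graph_def by blast
    then show "\<exists>t\<in>{0::nat}. e \<subseteq> V" by simp
  qed
  have b: "\<forall>v\<in>V. connected_graph {t \<in> {0::nat}. v \<in> V} {e \<in> {}. e \<subseteq> {t \<in> {0}. v \<in> V}}"
    unfolding connected_graph_def by simp
  have c: "\<forall>v\<in>V. \<exists>t\<in>{0::nat}. v \<in> V" by blast
  have d: "\<forall>t\<in>{0::nat}. V \<subseteq> V" by blast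
  show ?thesis unfolding tree_decomposition_def by (intro conjI tr a b c d)
qed

lemma tree_fin_ne: "tree VT ET \<Longrightarrow> finite VT \<and> VT \<noteq> {}"
  unfolding tree_def graph_def connected_graph_def by (elim conjE) (intro conjI)

lemma tw_attained:
  assumes g: "graph V E"
  shows "\<exists>VT ET B. tree_decomposition V E VT ET B \<and> treewidth V E = decomposition_width VT B"
proof -
  let ?W = "{w. \<exists>VT ET B. tree_decomposition V E VT ET B \<and> w = decomposition_width VT B}"
  have fV: "finite V" using g unfolding graph_def by simp
  have "decomposition_width {0} (\<lambda>_. V) \<in> ?W" using trivial_td[OF g] by blast
  then have ne: "?W \<noteq> {}" by blast
  have "?W \<subseteq> {-1 .. int (card V)}"
  proof
    fix w assume "w \<in> ?W"
    then obtain VT ET B where td: "tree_decomposition V E VT ET B" and w: "w = decomposition_width VT B"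
      by blast
    have "tree VT ET" using td unfolding tree_decomposition_def by blast
    then have fT: "finite VT" and neT: "VT \<noteq> {}" using tree_fin_ne by blast+
    have "\<forall>t\<in>VT. card (B t) \<le> card V"
    proof
      fix t assume "t \<in> VT"
      then have "B t \<subseteq> V" using td unfolding tree_decomposition_def by blast
      then show "card (B t) \<le> card V" using fV by (rule card_mono[rotated])
    qed
    then have "Max ((\<lambda>t. card (B t)) ` VT) \<le> card V" using fT neT by simp
    then show "w \<in> {-1 .. int (card V)}" using w unfolding decomposition_width_def by simp
  qed
  then have "finite ?W" using finite_subset by blast
  then have "Min ?W \<in> ?W" using ne by (rule Min_in)
  then show ?thesis unfolding treewidth_def by blast
qed

theorem lemma5p2:
  fixes V :: "'a set" and E :: "'a set set"
    and \<H> :: "('a set \<times> 'a set set) set" and l :: nat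
  assumes "graph V E"
    and "\<forall>h\<in>\<H>. subgraph (fst h) (snd h) V E \<and> connected_graph (fst h) (snd h)"
  shows "(\<exists>S\<subseteq>\<H>. finite S \<and> card S > l \<and>
            (\<forall>h1\<in>S. \<forall>h2\<in>S. h1 \<noteq> h2 \<longrightarrow> fst h1 \<inter> fst h2 = {}))
       \<or> (\<exists>Q\<subseteq>V. real (card Q) \<le> real_of_int (treewidth V E + 1) * real l * log 2 (real l + 1)
                 \<and> (\<forall>h\<in>\<H>. fst h \<inter> Q \<noteq> {}))"
proof -
  obtain VT ET B where td: "tree_decomposition V E VT ET B"
    and tw: "treewidth V E = decomposition_width VT B"
    using tw_attained[OF assms(1)] by blast
  have tr: "tree VT ET" using td unfolding tree_decomposition_def by blast
  have fT: "finite VT" and neT: "VT \<noteq> {}" using tree_fin_ne[OF tr] by blast+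
  have fV: "finite V" using assms(1) unfolding graph_def by simp
  have BV: "\<And>t. t \<in> VT \<Longrightarrow> B t \<subseteq> V" using td unfolding tree_decomposition_def by blast
  have bagv: "\<And>v. v \<in> V \<Longrightarrow> \<exists>t\<in>VT. v \<in> B t" using td unfolding tree_decomposition_def by blast
  let ?f = "\<lambda>h. {t\<in>VT. B t \<inter> fst h \<noteq> {}}"
  have p: "\<forall>S\<in>?f ` \<H>. S \<subseteq> VT \<and> connected_graph S {e\<in>ET. e\<subseteq>S}"
  proof
    fix S assume "S \<in> ?f ` \<H>"
    then obtain h where h: "h \<in> \<H>" "S = ?f h" by blast
    have "connected_graph (?f h) {e\<in>ET. e\<subseteq>?f h}"
      using bag_conn[OF td, of "fst h" "snd h"] assms(2) h(1) by blast
    then show "S \<subseteq> VT \<and> connected_graph S {e\<in>ET. e\<subseteq>S}" using h(2) by simp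
  qed
  from tree_hitting[OF tr p, of l] show ?thesis
  proof
    assume "\<exists>S'\<subseteq>?f ` \<H>. finite S' \<and> card S' > l \<and> (\<forall>A\<in>S'. \<forall>B\<in>S'. A\<noteq>B \<longrightarrow> A\<inter>B={})"
    then obtain S' where S': "S' \<subseteq> ?f ` \<H>" "finite S'" "card S' > l"
      "\<forall>A\<in>S'. \<forall>B\<in>S'. A\<noteq>B \<longrightarrow> A\<inter>B={}" by (elim exE conjE) simp
    have "\<exists>U. U \<subseteq> \<H> \<and> inj_on ?f U \<and> S' = ?f ` U"
      using S'(1) by (simp only: subset_image_inj)
    then obtain U where U: "U \<subseteq> \<H>" "inj_on ?f U" "S' = ?f ` U" by (elim exE conjE) simp
    have "finite (?f ` U)" using S'(2) U(3) by simp
    then have fU: "finite U" using finite_image_iff[OF U(2)] by simp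
    have cU: "card U = card S'" using card_image[OF U(2)] U(3) by simp
    have "\<forall>h1\<in>U. \<forall>h2\<in>U. h1 \<noteq> h2 \<longrightarrow> fst h1 \<inter> fst h2 = {}"
    proof (intro ballI impI)
      fix h1 h2 assume A: "h1 \<in> U" and B: "h2 \<in> U" and AB: "h1 \<noteq> h2"
      have "?f h1 \<noteq> ?f h2" using U(2) A B AB unfolding inj_on_def by blast
      moreover have "?f h1 \<in> S'" "?f h2 \<in> S'" using U(3) A B by simp_all
      ultimately have d: "?f h1 \<inter> ?f h2 = {}" using S'(4) by simp
      show "fst h1 \<inter> fst h2 = {}"
      proof (rule ccontr)
        assume "fst h1 \<inter> fst h2 \<noteq> {}"
        then obtain v where v: "v \<in> fst h1" "v \<in> fst h2" by blast
        have "h1 \<in> \<H>" using A U(1) by blast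
        then have "fst h1 \<subseteq> V" using assms(2) unfolding subgraph_def by blast
        then have "v \<in> V" using v by blast
        then obtain t where t: "t \<in> VT" "v \<in> B t" using bagv by blast
        then have "t \<in> ?f h1 \<inter> ?f h2" using v by blast
        then show False using d by simp
      qed
    qed
    then show ?thesis using U(1) fU cU S'(3) by (intro disjI1 exI[of _ U]) simp
  next
    assume "\<exists>X\<subseteq>VT. card X \<le> l \<and> (\<forall>S\<in>?f ` \<H>. S\<inter>X \<noteq> {})"
    then obtain X where X: "X \<subseteq> VT" "card X \<le> l" "\<forall>S\<in>?f ` \<H>. S\<inter>X \<noteq> {}"
      by (elim exE conjE) simp
    have fX: "finite X" using X(1) fT finite_subset by blast
    let ?Q = "\<Union>(B ` X)"
    let ?M = "Max ((\<lambda>t. card (B t)) ` VT)"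
    have QV: "?Q \<subseteq> V" using X(1) BV by blast
    have "card ?Q \<le> (\<Sum>t\<in>X. card (B t))" using fX by (rule card_UN_le)
    also have "\<dots> \<le> (\<Sum>t\<in>X. ?M)"
    proof (rule sum_mono)
      fix t assume "t \<in> X"
      then have "t \<in> VT" using X(1) by blast
      then show "card (B t) \<le> ?M" using fT by simp
    qed
    also have "\<dots> = card X * ?M" by simp
    also have "\<dots> \<le> l * ?M" using X(2) by simp
    finally have cQ: "card ?Q \<le> l * ?M" .
    have twM: "real_of_int (treewidth V E + 1) = real ?M" using tw unfolding decomposition_width_def by simp
    have bound: "real (card ?Q) \<le> real ?M * real l * log 2 (real l + 1)"
    proof (cases "l = 0")
      case True
      then show ?thesis using cQ by simp
    next
      case False
      have "log 2 2 \<le> log 2 (real l + 1)" using False by (subst log_le_cancel_iff) auto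
      then have lg: "1 \<le> log 2 (real l + 1)" by simp
      have "real (card ?Q) \<le> real ?M * real l" using cQ
        by (metis mult.commute of_nat_le_iff of_nat_mult)
      also have "\<dots> \<le> real ?M * real l * log 2 (real l + 1)"
        using mult_left_mono[OF lg, of "real ?M * real l"] by simp
      finally show ?thesis .
    qed
    have hit: "\<forall>h\<in>\<H>. fst h \<inter> ?Q \<noteq> {}"
    proof
      fix h assume "h \<in> \<H>"
      then have "?f h \<inter> X \<noteq> {}" using X(3) by simp
      then obtain t where "t \<in> X" "B t \<inter> fst h \<noteq> {}" by blast
      then show "fst h \<inter> ?Q \<noteq> {}" by blast
    qed
    show ?thesis using QV bound hit twM by (intro disjI2 exI[of _ ?Q]) simp
  qed
qed

end
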